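(* Let $F$ be a finite field of characteristic $3$. Let $k\ge 0$ be an integer, $m=3k+1$, and $t$ an integer with $t^3\equiv 1\pmod m$ and $\gcd(m,t-1)=1$. Let $G=T_{3m}=\langle x,y\mid x^m=y^3=1,\ y^{-1}xy=x^t\rangle$ (of order $3m$), $FG$ its group algebra, and $H=\langle x\rangle$. Then $\Delta(G,H)$ is a semisimple ring.
   Context: $\Delta(G,H)$ is the ideal of $FG$ generated by $\{h-1\mid h\in H\}$, regarded as a ring with the multiplication of $FG$. *)

theory Defs
  imports "HOL-Algebra.Algebra"
begin

text \<open>Group algebra FG of a finite group G (HOL-Algebra) over a field 'f:
  elements are functions carrier G \<rightarrow> 'f (extended by 0 outside the carrier),
  with pointwise addition and convolution product.\<close>

definition group_alg :: "('g, 'b) monoid_scheme \<Rightarrow> ('g \<Rightarrow> 'f::field) set" where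
  "group_alg G = {a. \<forall>g. g \<notin> carrier G \<longrightarrow> a g = 0}"

definition ga_add :: "('g \<Rightarrow> 'f::field) \<Rightarrow> ('g \<Rightarrow> 'f) \<Rightarrow> ('g \<Rightarrow> 'f)" where
  "ga_add a b = (\<lambda>g. a g + b g)"

definition ga_neg :: "('g \<Rightarrow> 'f::field) \<Rightarrow> ('g \<Rightarrow> 'f)" where
  "ga_neg a = (\<lambda>g. - a g)"

definition ga_zero :: "'g \<Rightarrow> 'f::field" where
  "ga_zero = (\<lambda>g. 0)"

definition ga_mult :: "('g, 'b) monoid_scheme \<Rightarrow> ('g \<Rightarrow> 'f::field) \<Rightarrow> ('g \<Rightarrow> 'f) \<Rightarrow> ('g \<Rightarrow> 'f)" where
  "ga_mult G a b = (\<lambda>g. if g \<in> carrier G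
      then (\<Sum>h\<in>carrier G. a h * b (inv\<^bsub>G\<^esub> h \<otimes>\<^bsub>G\<^esub> g)) else 0)"

definition ga_basis :: "('g, 'b) monoid_scheme \<Rightarrow> 'g \<Rightarrow> ('g \<Rightarrow> 'f::field)" where
  "ga_basis G g = (\<lambda>h. if h = g then 1 else 0)"

definition ga_ideal :: "('g, 'b) monoid_scheme \<Rightarrow> ('g \<Rightarrow> 'f::field) set \<Rightarrow> bool" where
  "ga_ideal G I \<longleftrightarrow> I \<subseteq> group_alg G \<and> ga_zero \<in> I
     \<and> (\<forall>a\<in>I. \<forall>b\<in>I. ga_add a b \<in> I) \<and> (\<forall>a\<in>I. ga_neg a \<in> I)
     \<and> (\<forall>r\<in>group_alg G. \<forall>a\<in>I. ga_mult G r a \<in> I \<and> ga_mult G a r \<in> I)"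

definition ga_ideal_gen :: "('g, 'b) monoid_scheme \<Rightarrow> ('g \<Rightarrow> 'f::field) set \<Rightarrow> ('g \<Rightarrow> 'f) set" where
  "ga_ideal_gen G S = \<Inter>{I. ga_ideal G I \<and> S \<subseteq> I}"

definition Delta :: "('g, 'b) monoid_scheme \<Rightarrow> 'g set \<Rightarrow> ('g \<Rightarrow> 'f::field) set" where
  "Delta G H = ga_ideal_gen G
     {ga_add (ga_basis G h) (ga_neg (ga_basis G \<one>\<^bsub>G\<^esub>)) | h. h \<in> H}"

text \<open>Jacobson radical of a (possibly non-unital) ring given by a carrier R closed
  under the FG operations, with the multiplication of FG:
  J(R) = {a \<in> R. \<forall>r \<in> R. r a is left quasi-regular},
  where z is left quasi-regular iff \<exists>w \<in> R. w + z - w z = 0.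
  A ring is semisimple (in the sense of Jacobson) iff J(R) = 0.\<close>
definition ga_jacobson_rad :: "('g, 'b) monoid_scheme \<Rightarrow> ('g \<Rightarrow> 'f::field) set \<Rightarrow> ('g \<Rightarrow> 'f) set" where
  "ga_jacobson_rad G R = {a\<in>R. \<forall>r\<in>R. \<exists>w\<in>R.
      ga_add (ga_add w (ga_mult G r a)) (ga_neg (ga_mult G w (ga_mult G r a))) = ga_zero}"

definition ga_semisimple_ring :: "('g, 'b) monoid_scheme \<Rightarrow> ('g \<Rightarrow> 'f::field) set \<Rightarrow> bool" where
  "ga_semisimple_ring G R \<longleftrightarrow> ga_jacobson_rad G R = {ga_zero}"

end

theory Submission
  imports Defs
begin


lemma ga_in: "a \<in> group_alg G \<longleftrightarrow> (\<forall>g. g \<notin> carrier G \<longrightarrow> a g = 0)"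
  by (simp add: group_alg_def)

context group begin

lemma sum_lmult_reindex:
  assumes "c \<in> carrier G"
  shows "(\<Sum>h\<in>carrier G. F h) = (\<Sum>l\<in>carrier G. F (c \<otimes> l))"
proof -
  have "(\<Sum>h\<in>carrier G. F h) = (\<Sum>h\<in>(\<lambda>x. c \<otimes> x) ` carrier G. F h)"
    using surj_const_mult[OF assms] by simp
  also have "\<dots> = (\<Sum>l\<in>carrier G. F (c \<otimes> l))"
    by (simp add: sum.reindex[OF inj_on_cmult[OF assms]])
  finally show ?thesis .
qed

end

locale fgroup = group G for G (structure) + assumes fin: "finite (carrier G)"

context fgroup begin

lemma ga_mult_closed: "ga_mult G a b \<in> group_alg G"
  by (simp add: group_alg_def ga_mult_def)

lemma ga_assoc:
  assumes a: "a \<in> group_alg G" and b: "b \<in> group_alg G" and c: "c \<in> group_alg G"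
  shows "ga_mult G (ga_mult G a b) c = ga_mult G a (ga_mult G b c)"
proof (rule ext)
  fix g
  show "ga_mult G (ga_mult G a b) c g = ga_mult G a (ga_mult G b c) g"
  proof (cases "g \<in> carrier G")
    case False then show ?thesis by (simp add: ga_mult_def)
  next
    case g: True
    note fin[simp]
    have "ga_mult G (ga_mult G a b) c g
       = (\<Sum>h\<in>carrier G. (\<Sum>k\<in>carrier G. a k * b (inv k \<otimes> h)) * c (inv h \<otimes> g))"
      using g by (simp add: ga_mult_def)
    also have "\<dots> = (\<Sum>h\<in>carrier G. \<Sum>k\<in>carrier G. a k * b (inv k \<otimes> h) * c (inv h \<otimes> g))"
      by (simp add: sum_distrib_right)
    also have "\<dots> = (\<Sum>k\<in>carrier G. \<Sum>h\<in>carrier G. a k * b (inv k \<otimes> h) * c (inv h \<otimes> g))"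
      by (rule sum.swap)
    also have "\<dots> = (\<Sum>k\<in>carrier G. a k * (\<Sum>l\<in>carrier G. b l * c (inv l \<otimes> (inv k \<otimes> g))))"
    proof (rule sum.cong[OF refl])
      fix k assume k: "k \<in> carrier G"
      have "(\<Sum>h\<in>carrier G. a k * b (inv k \<otimes> h) * c (inv h \<otimes> g))
          = (\<Sum>l\<in>carrier G. a k * b (inv k \<otimes> (k \<otimes> l)) * c (inv (k \<otimes> l) \<otimes> g))"
        by (rule sum_lmult_reindex[OF k])
      also have "\<dots> = (\<Sum>l\<in>carrier G. a k * (b l * c (inv l \<otimes> (inv k \<otimes> g))))"
        by (rule sum.cong[OF refl]) (simp add: k g inv_mult_group m_assoc flip: m_assoc[of "inv k" k])
      finally show "(\<Sum>h\<in>carrier G. a k * b (inv k \<otimes> h) * c (inv h \<otimes> g))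
          = a k * (\<Sum>l\<in>carrier G. b l * c (inv l \<otimes> (inv k \<otimes> g)))"
        by (simp add: sum_distrib_left)
    qed
    also have "\<dots> = ga_mult G a (ga_mult G b c) g"
      using g by (simp add: ga_mult_def)
    finally show ?thesis .
  qed
qed


lemma ga_basis_mult:
  assumes c: "c \<in> carrier G" and g: "g \<in> carrier G"
  shows "ga_mult G (ga_basis G c) a g = a (inv c \<otimes> g)"
proof -
  have "ga_mult G (ga_basis G c) a g = (\<Sum>h\<in>carrier G. if h = c then a (inv h \<otimes> g) else 0)"
    using g unfolding ga_mult_def ga_basis_def by (auto intro: sum.cong)
  also have "\<dots> = a (inv c \<otimes> g)" using c fin by simp
  finally show ?thesis .
qed

lemma inv_eq_iff: "h \<in> carrier G \<Longrightarrow> g \<in> carrier G \<Longrightarrow> c \<in> carrier G \<Longrightarrow>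
   (inv h \<otimes> g = c) = (h = g \<otimes> inv c)"
  by (metis inv_closed inv_inv inv_solve_left inv_solve_right m_closed)

lemma ga_mult_basis:
  assumes c: "c \<in> carrier G" and g: "g \<in> carrier G"
  shows "ga_mult G a (ga_basis G c) g = a (g \<otimes> inv c)"
proof -
  have "ga_mult G a (ga_basis G c) g = (\<Sum>h\<in>carrier G. if h = g \<otimes> inv c then a h else 0)"
    unfolding ga_mult_def ga_basis_def using g c
    by (auto simp: inv_eq_iff intro!: sum.cong)
  also have "\<dots> = a (g \<otimes> inv c)" using c g fin by simp
  finally show ?thesis .
qed

lemma ga_basis_in: "g \<in> carrier G \<Longrightarrow> ga_basis G g \<in> group_alg G"
  by (auto simp: group_alg_def ga_basis_def)

lemma ga_one_left: "a \<in> group_alg G \<Longrightarrow> ga_mult G (ga_basis G \<one>) a = a"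
  apply (rule ext)
  subgoal for g by (cases "g \<in> carrier G") (simp add: ga_basis_mult, simp add: group_alg_def ga_mult_def)
  done

lemma ga_one_right: "a \<in> group_alg G \<Longrightarrow> ga_mult G a (ga_basis G \<one>) = a"
  apply (rule ext)
  subgoal for g by (cases "g \<in> carrier G") (simp add: ga_mult_basis, simp add: group_alg_def ga_mult_def)
  done

lemma ga_add_in: "a \<in> group_alg G \<Longrightarrow> b \<in> group_alg G \<Longrightarrow> ga_add a b \<in> group_alg G"
  by (auto simp: group_alg_def ga_add_def)
lemma ga_neg_in: "a \<in> group_alg G \<Longrightarrow> ga_neg a \<in> group_alg G"
  by (auto simp: group_alg_def ga_neg_def)
lemma ga_zero_in: "ga_zero \<in> group_alg G"
  by (auto simp: group_alg_def ga_zero_def)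

lemma ga_distr_right: "ga_mult G (ga_add a b) c = ga_add (ga_mult G a c) (ga_mult G b c)"
  by (rule ext) (simp add: ga_mult_def ga_add_def distrib_right sum.distrib)
lemma ga_distr_left: "ga_mult G c (ga_add a b) = ga_add (ga_mult G c a) (ga_mult G c b)"
  by (rule ext) (simp add: ga_mult_def ga_add_def distrib_left sum.distrib)
lemma ga_neg_right: "ga_mult G (ga_neg a) c = ga_neg (ga_mult G a c)"
  by (rule ext) (simp add: ga_mult_def ga_neg_def sum_negf)
lemma ga_neg_left: "ga_mult G c (ga_neg a) = ga_neg (ga_mult G c a)"
  by (rule ext) (simp add: ga_mult_def ga_neg_def sum_negf)
lemma ga_zero_right: "ga_mult G c ga_zero = ga_zero"
  by (rule ext) (simp add: ga_mult_def ga_zero_def)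
lemma ga_zero_left: "ga_mult G ga_zero c = ga_zero"
  by (rule ext) (simp add: ga_mult_def ga_zero_def)

lemma ideal_group_alg: "ga_ideal G (group_alg G)"
  by (simp add: ga_ideal_def ga_add_in ga_neg_in ga_zero_in ga_mult_closed)

lemma ideal_gen_ideal:
  assumes "S \<subseteq> group_alg G"
  shows "ga_ideal G (ga_ideal_gen G S)"
proof -
  have ne: "group_alg G \<in> {I. ga_ideal G I \<and> S \<subseteq> I}" using assms ideal_group_alg by simp
  show ?thesis unfolding ga_ideal_gen_def ga_ideal_def
    using ne by (auto simp: ga_ideal_def)
qed

lemma ideal_gen_sub: "S \<subseteq> ga_ideal_gen G S"
  by (auto simp: ga_ideal_gen_def)

lemma ideal_gen_least: "ga_ideal G I \<Longrightarrow> S \<subseteq> I \<Longrightarrow> ga_ideal_gen G S \<subseteq> I"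
  by (auto simp: ga_ideal_gen_def)

end

definition FGM :: "('g, 'b) monoid_scheme \<Rightarrow> ('g \<Rightarrow> 'f::field) monoid" where
  "FGM G = \<lparr>carrier = group_alg G, monoid.mult = ga_mult G, one = ga_basis G \<one>\<^bsub>G\<^esub>\<rparr>"

lemma (in fgroup) monoid_FGM:
  shows "monoid (FGM G :: ('a \<Rightarrow> 'f::field) monoid)"
  by (rule monoidI) (auto simp: FGM_def ga_mult_closed ga_basis_in ga_one_left ga_one_right ga_assoc)

lemma (in monoid) idem_power:
  assumes fin: "finite (carrier G)" and z: "z \<in> carrier G"
  shows "\<exists>n::nat. n \<ge> 1 \<and> z [^] n \<otimes> z [^] n = z [^] n"
proof -
  let ?S = "{1..Suc (card (carrier G))}"
  have "\<not> inj_on (\<lambda>k::nat. z [^] k) ?S"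
  proof
    assume inj: "inj_on (\<lambda>k::nat. z [^] k) ?S"
    have "(\<lambda>k::nat. z [^] k) ` ?S \<subseteq> carrier G" using z by auto
    hence "card ((\<lambda>k::nat. z [^] k) ` ?S) \<le> card (carrier G)"
      using fin card_mono by blast
    with card_image[OF inj] show False by simp
  qed
  then obtain i j :: nat where ij: "i \<in> ?S" "j \<in> ?S" "i \<noteq> j" "z [^] i = z [^] j"
    unfolding inj_on_def by blast
  obtain a b :: nat where ab: "1 \<le> a" "a < b" "z [^] a = z [^] b"
  proof (cases "i < j")
    case True then show ?thesis using ij that[of i j] by auto
  next
    case False then show ?thesis using ij that[of j i] by auto
  qed
  define p where "p = b - a"
  have p1: "p \<ge> 1" using ab by (simp add: p_def)
  have step: "z [^] (k + p) = z [^] k" if "k \<ge> a" for k :: nat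
  proof -
    have e1: "k + p = (k - a) + b" using that ab by (simp add: p_def)
    have e2: "k = (k - a) + a" using that by simp
    have "z [^] (k + p) = z [^] (k - a) \<otimes> z [^] b"
      unfolding e1 by (rule nat_pow_mult[OF z, symmetric])
    also have "\<dots> = z [^] (k - a) \<otimes> z [^] a" using ab by simp
    also have "\<dots> = z [^] ((k - a) + a)" by (rule nat_pow_mult[OF z])
    also have "\<dots> = z [^] k" using e2 by simp
    finally show ?thesis .
  qed
  have iter: "z [^] (k + q * p) = z [^] k" if "k \<ge> a" for k q :: nat
  proof (induction q)
    case 0 then show ?case by simp
  next
    case (Suc q)
    have e: "k + Suc q * p = (k + q * p) + p" by simp
    have "z [^] (k + Suc q * p) = z [^] (k + q * p)" unfolding e using step that by simp
    then show ?case using Suc by simp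
  qed
  define n where "n = a * p"
  have na: "n \<ge> a" using p1 by (simp add: n_def)
  have "z [^] n \<otimes> z [^] n = z [^] (n + a * p)" by (simp add: nat_pow_mult z n_def)
  also have "\<dots> = z [^] n" by (rule iter[OF na])
  finally have "z [^] n \<otimes> z [^] n = z [^] n" .
  moreover have "n \<ge> 1" using ab p1 by (simp add: n_def)
  ultimately show ?thesis by blast
qed




lemma three_zero: "CHAR('f::field) = 3 \<Longrightarrow> (3::'f) = 0"
  by (metis of_nat_CHAR of_nat_numeral)

lemma sum_rot3:
  fixes Phi :: "'a \<Rightarrow> 'f::field"
  assumes char: "CHAR('f) = 3" and fin: "finite XX"
    and cl: "\<forall>T\<in>XX. rr T \<in> XX" and per: "\<forall>T\<in>XX. rr (rr (rr T)) = T"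
    and phinv: "\<forall>T\<in>XX. Phi (rr T) = Phi T"
  shows "sum Phi XX = sum Phi {T\<in>XX. rr T = T}"
  using fin cl per phinv
proof (induction XX rule: finite_psubset_induct)
  case (psubset XX)
  show ?case
  proof (cases "\<forall>T\<in>XX. rr T = T")
    case True
    then have "{T\<in>XX. rr T = T} = XX" by auto
    then show ?thesis by simp
  next
    case False
    then obtain T0 where T0: "T0 \<in> XX" "rr T0 \<noteq> T0" by auto
    have T1: "rr T0 \<in> XX" and T2: "rr (rr T0) \<in> XX" using psubset.prems T0 by auto
    have p0: "rr (rr (rr T0)) = T0" using psubset.prems T0 by auto
    have d1: "rr (rr T0) \<noteq> T0" using p0 T0 by metis
    have d2: "rr (rr T0) \<noteq> rr T0" using p0 T0 by metis
    define Orb where "Orb = {T0, rr T0, rr (rr T0)}"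
    have OX: "Orb \<subseteq> XX" using T0 T1 T2 by (auto simp: Orb_def)
    have sO: "sum Phi Orb = 3 * Phi T0"
      using T0 d1 d2 psubset.prems T1 by (simp add: Orb_def)
    have sO0: "sum Phi Orb = 0" using sO three_zero[OF char] by simp
    define XXX' where "XXX' = XX - Orb"
    have psub: "XXX' \<subset> XX" using T0 by (auto simp: XXX'_def Orb_def)
    have cl': "\<forall>T\<in>XXX'. rr T \<in> XXX'"
    proof
      fix T assume T: "T \<in> XXX'"
      then have TX: "T \<in> XX" "T \<notin> Orb" by (auto simp: XXX'_def)
      have "rr T \<notin> Orb"
      proof
        assume "rr T \<in> Orb"
        then have "rr (rr (rr T)) \<in> rr ` rr ` Orb" by blast
        also have "rr ` rr ` Orb = Orb" using p0 by (auto simp: Orb_def)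
        finally show False using TX psubset.prems by auto
      qed
      then show "rr T \<in> XXX'" using TX psubset.prems by (auto simp: XXX'_def)
    qed
    have IH: "sum Phi XXX' = sum Phi {T\<in>XXX'. rr T = T}"
      using psubset.IH[OF psub] cl' psubset.prems by (auto simp: XXX'_def)
    have "sum Phi XX = sum Phi Orb + sum Phi XXX'"
      using OX psubset.hyps by (simp add: XXX'_def sum.subset_diff)
    also have "\<dots> = sum Phi {T\<in>XXX'. rr T = T}" using sO0 IH by simp
    also have "{T\<in>XXX'. rr T = T} = {T\<in>XX. rr T = T}"
      using T0 d1 d2 p0 by (auto simp: XXX'_def Orb_def)
    finally show ?thesis .
  qed
qed


lemma frob3_add:
  fixes a b :: "'f::field"
  assumes char: "CHAR('f) = 3"
  shows "(a + b) ^ 3 = a ^ 3 + b ^ 3"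
proof -
  have "(a + b) ^ 3 = a ^ 3 + b ^ 3 + 3 * (a^2 * b + a * b^2)"
    by (simp add: power3_eq_cube power2_eq_square algebra_simps)
  then show ?thesis using three_zero[OF char] by simp
qed

lemma frob3_sum:
  fixes f :: "'a \<Rightarrow> 'f::field"
  assumes char: "CHAR('f) = 3"
  shows "(\<Sum>x\<in>A. f x) ^ 3 = (\<Sum>x\<in>A. f x ^ 3)"
proof (induction A rule: infinite_finite_induct)
  case (insert x F)
  then show ?case by (simp add: frob3_add[OF char])
qed simp_all

lemma sum_restrict_sub:
  assumes "finite C" "D \<subseteq> C"
  shows "(\<Sum>x\<in>C. if x \<in> D then f x else 0) = sum f D"
proof -
  have "(\<Sum>x\<in>C. if x \<in> D then f x else 0) = sum f (C \<inter> {x. x \<in> D})"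
    using assms(1) by (simp add: sum.inter_restrict)
  also have "C \<inter> {x. x \<in> D} = D" using assms(2) by auto
  finally show ?thesis .
qed

locale frob3 = fgroup G for G (structure) + fixes H
  assumes Hsub: "subgroup H G"
    and Hnorm: "\<And>g h. g \<in> carrier G \<Longrightarrow> h \<in> H \<Longrightarrow> inv g \<otimes> h \<otimes> g \<in> H"
    and cube_out: "\<And>g. g \<in> carrier G \<Longrightarrow> g \<notin> H \<Longrightarrow> g \<otimes> g \<otimes> g = \<one>"
    and cube_in: "\<And>h. h \<in> H \<Longrightarrow> h \<noteq> \<one> \<Longrightarrow> h \<otimes> h \<otimes> h \<noteq> \<one>"
begin

lemma H_carrier: "H \<subseteq> carrier G"
  using Hsub by (rule subgroup.subset)

lemma D_carrier: "H - {\<one>} \<subseteq> carrier G"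
  using H_carrier by auto

lemma rot_D:
  assumes a: "a \<in> carrier G" and b: "b \<in> carrier G" and c: "c \<in> carrier G"
    and D: "a \<otimes> b \<otimes> c \<in> H - {\<one>}"
  shows "b \<otimes> c \<otimes> a \<in> H - {\<one>}"
proof -
  have e: "b \<otimes> c \<otimes> a = inv a \<otimes> (a \<otimes> b \<otimes> c) \<otimes> a"
    using a b c by (simp add: m_assoc flip: m_assoc[of "inv a" a])
  have "inv a \<otimes> (a \<otimes> b \<otimes> c) \<otimes> a \<in> H" using Hnorm[OF a] D by auto
  moreover have "b \<otimes> c \<otimes> a \<noteq> \<one>"
  proof
    assume "b \<otimes> c \<otimes> a = \<one>"
    then have "a \<otimes> (b \<otimes> c \<otimes> a) \<otimes> inv a = \<one>" using a by simp
    moreover have "a \<otimes> (b \<otimes> c \<otimes> a) \<otimes> inv a = a \<otimes> b \<otimes> c"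
      using a b c by (simp add: m_assoc)
    ultimately show False using D by simp
  qed
  ultimately show ?thesis using e by simp
qed

lemma rot_D_iff:
  assumes a: "a \<in> carrier G" and b: "b \<in> carrier G" and c: "c \<in> carrier G"
  shows "(b \<otimes> c \<otimes> a \<in> H - {\<one>}) = (a \<otimes> b \<otimes> c \<in> H - {\<one>})"
  using rot_D[OF a b c] rot_D[OF b c a] rot_D[OF c a b] by blast

lemma cube_D:
  assumes g: "g \<in> carrier G"
  shows "(g \<otimes> g \<otimes> g \<in> H - {\<one>}) = (g \<in> H - {\<one>})"
proof (cases "g \<in> H")
  case True
  then have "g \<otimes> g \<otimes> g \<in> H" using Hsub by (simp add: subgroup.m_closed)
  then show ?thesis using cube_in[OF True] True by auto
next
  case False
  then show ?thesis using cube_out[OF g False] by simp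
qed

lemma triple_expand:
  assumes k: "k \<in> carrier G"
  shows "ga_mult G (ga_mult G u u) u k
     = (\<Sum>g1\<in>carrier G. \<Sum>g2\<in>carrier G. u g1 * u g2 * u (inv (g1 \<otimes> g2) \<otimes> k))"
proof -
  have "ga_mult G (ga_mult G u u) u k
     = (\<Sum>w\<in>carrier G. (\<Sum>g1\<in>carrier G. u g1 * u (inv g1 \<otimes> w)) * u (inv w \<otimes> k))"
    using k by (simp add: ga_mult_def)
  also have "\<dots> = (\<Sum>w\<in>carrier G. \<Sum>g1\<in>carrier G. u g1 * u (inv g1 \<otimes> w) * u (inv w \<otimes> k))"
    by (simp add: sum_distrib_right)
  also have "\<dots> = (\<Sum>g1\<in>carrier G. \<Sum>w\<in>carrier G. u g1 * u (inv g1 \<otimes> w) * u (inv w \<otimes> k))"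
    by (rule sum.swap)
  also have "\<dots> = (\<Sum>g1\<in>carrier G. \<Sum>g2\<in>carrier G. u g1 * u g2 * u (inv (g1 \<otimes> g2) \<otimes> k))"
  proof (rule sum.cong[OF refl])
    fix g1 assume g1: "g1 \<in> carrier G"
    show "(\<Sum>w\<in>carrier G. u g1 * u (inv g1 \<otimes> w) * u (inv w \<otimes> k))
        = (\<Sum>g2\<in>carrier G. u g1 * u g2 * u (inv (g1 \<otimes> g2) \<otimes> k))"
      by (subst sum_lmult_reindex[OF g1]) (simp add: g1 flip: m_assoc)
  qed
  finally show ?thesis .
qed

lemma psi_cube:
  assumes char: "CHAR('f::field) = 3"
  shows "(\<Sum>k\<in>H - {\<one>}. ga_mult G (ga_mult G u u) u k) = (\<Sum>k\<in>H - {\<one>}. (u k :: 'f)) ^ 3"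
proof -
  let ?C = "carrier G"
  let ?D = "H - {\<one>}"
  define Phi where "Phi = (\<lambda>(a,b,c). if a \<otimes> b \<otimes> c \<in> ?D then u a * u b * u c else (0::'f))"
  have "(\<Sum>k\<in>?D. ga_mult G (ga_mult G u u) u k)
      = (\<Sum>k\<in>?C. if k \<in> ?D then ga_mult G (ga_mult G u u) u k else 0)"
    by (rule sum_restrict_sub[OF fin D_carrier, symmetric])
  also have "\<dots> = (\<Sum>k\<in>?C. \<Sum>g1\<in>?C. \<Sum>g2\<in>?C.
        if k \<in> ?D then u g1 * u g2 * u (inv (g1 \<otimes> g2) \<otimes> k) else 0)"
  proof (rule sum.cong[OF refl])
    fix k assume k: "k \<in> ?C"
    show "(if k \<in> ?D then ga_mult G (ga_mult G u u) u k else 0) = (\<Sum>g1\<in>?C. \<Sum>g2\<in>?C.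
        if k \<in> ?D then u g1 * u g2 * u (inv (g1 \<otimes> g2) \<otimes> k) else 0)"
    proof (cases "k \<in> ?D")
      case True then show ?thesis using triple_expand[OF k] by simp
    next
      case False then show ?thesis by (simp only: if_False sum.neutral_const)
    qed
  qed
  also have "\<dots> = (\<Sum>g1\<in>?C. \<Sum>k\<in>?C. \<Sum>g2\<in>?C.
        if k \<in> ?D then u g1 * u g2 * u (inv (g1 \<otimes> g2) \<otimes> k) else 0)"
    by (rule sum.swap)
  also have "\<dots> = (\<Sum>g1\<in>?C. \<Sum>g2\<in>?C. \<Sum>k\<in>?C.
        if k \<in> ?D then u g1 * u g2 * u (inv (g1 \<otimes> g2) \<otimes> k) else 0)"
    by (rule sum.cong[OF refl], rule sum.swap)
  also have "\<dots> = (\<Sum>g1\<in>?C. \<Sum>g2\<in>?C. \<Sum>g3\<in>?C. Phi (g1, g2, g3))"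
  proof (rule sum.cong[OF refl], rule sum.cong[OF refl])
    fix g1 g2 assume g1: "g1 \<in> ?C" and g2: "g2 \<in> ?C"
    have g12: "g1 \<otimes> g2 \<in> ?C" using g1 g2 by simp
    have canc: "inv (g1 \<otimes> g2) \<otimes> (g1 \<otimes> g2 \<otimes> l) = l" if "l \<in> ?C" for l
      by (metis g12 that l_inv l_one m_assoc inv_closed)
    show "(\<Sum>k\<in>?C. if k \<in> ?D then u g1 * u g2 * u (inv (g1 \<otimes> g2) \<otimes> k) else 0)
        = (\<Sum>g3\<in>?C. Phi (g1, g2, g3))"
    proof -
      have "(\<Sum>k\<in>?C. if k \<in> ?D then u g1 * u g2 * u (inv (g1 \<otimes> g2) \<otimes> k) else 0)
        = (\<Sum>l\<in>?C. if g1 \<otimes> g2 \<otimes> l \<in> ?D then u g1 * u g2 * u (inv (g1 \<otimes> g2) \<otimes> (g1 \<otimes> g2 \<otimes> l)) else 0)"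
        by (rule sum_lmult_reindex[OF g12])
      also have "\<dots> = (\<Sum>g3\<in>?C. Phi (g1, g2, g3))"
        by (rule sum.cong[OF refl]) (simp add: Phi_def canc)
      finally show ?thesis .
    qed
  qed
  also have "\<dots> = (\<Sum>T\<in>?C \<times> ?C \<times> ?C. Phi T)"
    by (simp add: sum.cartesian_product)
  also have "\<dots> = (\<Sum>T\<in>{T\<in>?C \<times> ?C \<times> ?C. (\<lambda>(a,b,c). (b,c,a)) T = T}. Phi T)"
  proof (rule sum_rot3[OF char])
    show "finite (?C \<times> ?C \<times> ?C)" using fin by simp
    show "\<forall>T\<in>?C \<times> ?C \<times> ?C. (\<lambda>(a,b,c). (b,c,a)) T \<in> ?C \<times> ?C \<times> ?C" by auto
    show "\<forall>T\<in>?C \<times> ?C \<times> ?C. (\<lambda>(a,b,c). (b,c,a)) ((\<lambda>(a,b,c). (b,c,a)) ((\<lambda>(a,b,c). (b,c,a)) T)) = T"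
      by auto
    show "\<forall>T\<in>?C \<times> ?C \<times> ?C. Phi ((\<lambda>(a,b,c). (b,c,a)) T) = Phi T"
    proof
      fix T assume T: "T \<in> ?C \<times> ?C \<times> ?C"
      then obtain a b c where Tabc: "T = (a, b, c)" and a: "a \<in> ?C" and b: "b \<in> ?C" and c: "c \<in> ?C"
        by auto
      have m: "u b * u c * u a = u a * u b * u c" by (simp add: ac_simps)
      show "Phi ((\<lambda>(a,b,c). (b,c,a)) T) = Phi T"
        unfolding Tabc by (simp only: Phi_def prod.case rot_D_iff[OF a b c] m)
    qed
  qed
  also have "{T\<in>?C \<times> ?C \<times> ?C. (\<lambda>(a,b,c). (b,c,a)) T = T} = (\<lambda>g. (g,g,g)) ` ?C"
    by auto
  also have "(\<Sum>T\<in>(\<lambda>g. (g,g,g)) ` ?C. Phi T) = (\<Sum>g\<in>?C. Phi (g,g,g))"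
    by (subst sum.reindex) (auto simp: inj_on_def)
  also have "\<dots> = (\<Sum>g\<in>?C. if g \<in> ?D then u g ^ 3 else 0)"
  proof (rule sum.cong[OF refl])
    fix g assume g: "g \<in> ?C"
    show "Phi (g, g, g) = (if g \<in> ?D then u g ^ 3 else 0)"
      by (simp only: Phi_def prod.case cube_D[OF g] power3_eq_cube)
  qed
  also have "\<dots> = (\<Sum>g\<in>?D. u g ^ 3)"
    by (rule sum_restrict_sub[OF fin D_carrier])
  also have "\<dots> = (\<Sum>g\<in>?D. u g) ^ 3"
    by (rule frob3_sum[OF char, symmetric])
  finally show ?thesis .
qed

end




definition cs_set :: "('g, 'b) monoid_scheme \<Rightarrow> 'g set \<Rightarrow> ('g \<Rightarrow> 'f::field) set" where
  "cs_set G H = {u \<in> group_alg G. \<forall>g\<in>carrier G. (\<Sum>h\<in>H. u (h \<otimes>\<^bsub>G\<^esub> g)) = 0}"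

context frob3 begin

lemma finH: "finite H"
  using fin H_carrier finite_subset by blast

lemma conj_sum:
  assumes k: "k \<in> carrier G" and g: "g \<in> carrier G"
  shows "(\<Sum>h\<in>H. u (inv k \<otimes> (h \<otimes> g))) = (\<Sum>h\<in>H. u (h \<otimes> (inv k \<otimes> g)))"
proof (rule sum.reindex_bij_witness[where i = "\<lambda>h. k \<otimes> h \<otimes> inv k" and j = "\<lambda>h. inv k \<otimes> h \<otimes> k"])
  fix h assume h: "h \<in> H"
  then have hc: "h \<in> carrier G" using H_carrier by auto
  show "k \<otimes> (inv k \<otimes> h \<otimes> k) \<otimes> inv k = h" using hc k by (simp add: m_assoc flip: m_assoc[of k "inv k"])
  show "inv k \<otimes> h \<otimes> k \<in> H" using Hnorm[OF k h] .
  show "inv k \<otimes> (k \<otimes> h \<otimes> inv k) \<otimes> k = h" using hc k by (simp add: m_assoc flip: m_assoc[of "inv k" k])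
  show "k \<otimes> h \<otimes> inv k \<in> H" using Hnorm[of "inv k" h] h k by simp
  show "u (inv k \<otimes> h \<otimes> k \<otimes> (inv k \<otimes> g)) = u (inv k \<otimes> (h \<otimes> g))"
    using hc k g by (simp add: m_assoc flip: m_assoc[of k "inv k"])
qed

lemma inv_prod_cancel:
  assumes "h \<in> carrier G" "k \<in> carrier G" "g \<in> carrier G"
  shows "inv (h \<otimes> k) \<otimes> (h \<otimes> g) = inv k \<otimes> g"
  using assms by (simp add: inv_mult_group m_assoc flip: m_assoc[of "inv h" h])

lemma cs_ideal: "ga_ideal G (cs_set G H :: ('a \<Rightarrow> 'f::field) set)"
  unfolding ga_ideal_def
proof (intro conjI ballI)
  show "cs_set G H \<subseteq> group_alg G" by (auto simp: cs_set_def)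
  show "(ga_zero :: 'a \<Rightarrow> 'f) \<in> cs_set G H" by (simp add: cs_set_def ga_zero_in) (simp add: ga_zero_def)
  fix a b :: "'a \<Rightarrow> 'f" assume a: "a \<in> cs_set G H" and b: "b \<in> cs_set G H"
  then show "ga_add a b \<in> cs_set G H"
    using ga_add_in[of a b] by (auto simp: cs_set_def ga_add_def sum.distrib)
next
  fix a :: "'a \<Rightarrow> 'f" assume a: "a \<in> cs_set G H"
  then show "ga_neg a \<in> cs_set G H"
    using ga_neg_in[of a] by (auto simp: cs_set_def ga_neg_def sum_negf)
next
  fix r a :: "'a \<Rightarrow> 'f" assume r: "r \<in> group_alg G" and a: "a \<in> cs_set G H"
  have aG: "a \<in> group_alg G" and asum: "\<And>g. g \<in> carrier G \<Longrightarrow> (\<Sum>h\<in>H. a (h \<otimes> g)) = 0"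
    using a by (auto simp: cs_set_def)
  show "ga_mult G r a \<in> cs_set G H"
    unfolding cs_set_def
  proof (intro CollectI conjI ballI ga_mult_closed)
    fix g assume g: "g \<in> carrier G"
    have "(\<Sum>h\<in>H. ga_mult G r a (h \<otimes> g)) = (\<Sum>h\<in>H. \<Sum>k\<in>carrier G. r k * a (inv k \<otimes> (h \<otimes> g)))"
      by (rule sum.cong[OF refl]) (use g H_carrier in \<open>auto simp: ga_mult_def\<close>)
    also have "\<dots> = (\<Sum>k\<in>carrier G. r k * (\<Sum>h\<in>H. a (inv k \<otimes> (h \<otimes> g))))"
      by (simp add: sum.swap[of _ H] sum_distrib_left)
    also have "\<dots> = 0"
      by (rule sum.neutral) (simp add: conj_sum g asum)
    finally show "(\<Sum>h\<in>H. ga_mult G r a (h \<otimes> g)) = 0" .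
  qed
  show "ga_mult G a r \<in> cs_set G H"
    unfolding cs_set_def
  proof (intro CollectI conjI ballI ga_mult_closed)
    fix g assume g: "g \<in> carrier G"
    have "(\<Sum>h\<in>H. ga_mult G a r (h \<otimes> g)) = (\<Sum>h\<in>H. \<Sum>k\<in>carrier G. a k * r (inv k \<otimes> (h \<otimes> g)))"
      by (rule sum.cong[OF refl]) (use g H_carrier in \<open>auto simp: ga_mult_def\<close>)
    also have "\<dots> = (\<Sum>h\<in>H. \<Sum>k\<in>carrier G. a (h \<otimes> k) * r (inv k \<otimes> g))"
    proof (rule sum.cong[OF refl])
      fix h assume h: "h \<in> H"
      then have hc: "h \<in> carrier G" using H_carrier by auto
      show "(\<Sum>k\<in>carrier G. a k * r (inv k \<otimes> (h \<otimes> g))) = (\<Sum>k\<in>carrier G. a (h \<otimes> k) * r (inv k \<otimes> g))"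
        by (subst sum_lmult_reindex[OF hc]) (rule sum.cong[OF refl], simp add: inv_prod_cancel hc g)
    qed
    also have "\<dots> = (\<Sum>k\<in>carrier G. r (inv k \<otimes> g) * (\<Sum>h\<in>H. a (h \<otimes> k)))"
      by (subst sum.swap) (simp add: sum_distrib_left mult.commute)
    also have "\<dots> = 0"
      by (rule sum.neutral) (simp add: asum)
    finally show "(\<Sum>h\<in>H. ga_mult G a r (h \<otimes> g)) = 0" .
  qed
qed


lemma delta_sum:
  assumes c: "c \<in> carrier G" and g: "g \<in> carrier G"
  shows "(\<Sum>h\<in>H. (if h \<otimes> g = c then 1 else 0 :: 'f::field)) = (if c \<otimes> inv g \<in> H then 1 else 0)"
proof -
  have "(\<Sum>h\<in>H. (if h \<otimes> g = c then 1 else 0 :: 'f)) = (\<Sum>h\<in>H. (if h = c \<otimes> inv g then 1 else 0))"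
  proof (rule sum.cong[OF refl])
    fix h assume "h \<in> H"
    then have hc: "h \<in> carrier G" using H_carrier by auto
    have "(h \<otimes> g = c) = (h = c \<otimes> inv g)"
      using hc g c by (metis inv_solve_right)
    then show "(if h \<otimes> g = c then 1 else 0 :: 'f) = (if h = c \<otimes> inv g then 1 else 0)" by simp
  qed
  also have "\<dots> = (if c \<otimes> inv g \<in> H then 1 else 0)"
    using finH by simp
  finally show ?thesis .
qed

lemma gen_in_cs:
  assumes h0: "h0 \<in> H"
  shows "ga_add (ga_basis G h0) (ga_neg (ga_basis G \<one>)) \<in> (cs_set G H :: ('a \<Rightarrow> 'f::field) set)"
proof -
  have h0c: "h0 \<in> carrier G" using h0 H_carrier by auto
  have inG: "ga_add (ga_basis G h0) (ga_neg (ga_basis G \<one>)) \<in> (group_alg G :: ('a \<Rightarrow> 'f) set)"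
    by (intro ga_add_in ga_neg_in ga_basis_in h0c one_closed)
  have "(\<Sum>h\<in>H. (ga_add (ga_basis G h0) (ga_neg (ga_basis G \<one>)) :: 'a \<Rightarrow> 'f) (h \<otimes> g)) = 0"
    if g: "g \<in> carrier G" for g
  proof -
    have iff: "(h0 \<otimes> inv g \<in> H) = (\<one> \<otimes> inv g \<in> H)"
    proof
      assume "h0 \<otimes> inv g \<in> H"
      then have "inv h0 \<otimes> (h0 \<otimes> inv g) \<in> H" using h0 Hsub by (simp add: subgroup.m_closed subgroup.m_inv_closed)
      then show "\<one> \<otimes> inv g \<in> H" using h0c g by (simp flip: m_assoc)
    next
      assume "\<one> \<otimes> inv g \<in> H"
      then show "h0 \<otimes> inv g \<in> H" using h0 Hsub g by (simp add: subgroup.m_closed)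
    qed
    have "(\<Sum>h\<in>H. (ga_add (ga_basis G h0) (ga_neg (ga_basis G \<one>)) :: 'a \<Rightarrow> 'f) (h \<otimes> g))
        = (\<Sum>h\<in>H. (if h \<otimes> g = h0 then 1 else 0 :: 'f)) - (\<Sum>h\<in>H. (if h \<otimes> g = \<one> then 1 else 0 :: 'f))"
      by (simp add: ga_add_def ga_neg_def ga_basis_def sum_subtractf[symmetric])
    also have "\<dots> = 0"
      by (simp only: delta_sum[OF h0c g] delta_sum[OF one_closed g] iff diff_self)
    finally show ?thesis .
  qed
  then show ?thesis using inG by (simp add: cs_set_def)
qed

abbreviation gens where
  "gens \<equiv> {ga_add (ga_basis G h) (ga_neg (ga_basis G \<one>)) | h. h \<in> H}"

lemma gens_alg: "(gens :: ('a \<Rightarrow> 'f::field) set) \<subseteq> group_alg G"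
  using H_carrier by (auto intro!: ga_add_in ga_neg_in ga_basis_in)

lemma Delta_ideal: "ga_ideal G (Delta G H :: ('a \<Rightarrow> 'f::field) set)"
  unfolding Delta_def by (rule ideal_gen_ideal[OF gens_alg])

lemma Delta_cs: "(Delta G H :: ('a \<Rightarrow> 'f::field) set) \<subseteq> cs_set G H"
  unfolding Delta_def by (rule ideal_gen_least[OF cs_ideal]) (auto intro: gen_in_cs)

lemma gens_Delta: "h \<in> H \<Longrightarrow> ga_add (ga_basis G h) (ga_neg (ga_basis G \<one>)) \<in> (Delta G H :: ('a \<Rightarrow> 'f::field) set)"
  unfolding Delta_def by (rule subsetD[OF ideal_gen_sub]) blast

end



lemma FGM_simps [simp]:
  "carrier (FGM G) = group_alg G" "monoid.mult (FGM G) = ga_mult G" "one (FGM G) = ga_basis G \<one>\<^bsub>G\<^esub>"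
  by (simp_all add: FGM_def)

context fgroup begin

lemma quasi_idem:
  assumes w: "w \<in> group_alg G" and e: "e \<in> group_alg G" and ee: "ga_mult G e e = e"
    and q: "ga_add (ga_add w e) (ga_neg (ga_mult G w e)) = (ga_zero :: 'a \<Rightarrow> 'f::field)"
  shows "e = ga_zero"
proof -
  have "ga_mult G (ga_add (ga_add w e) (ga_neg (ga_mult G w e))) e = ga_zero"
    using q by (simp add: ga_zero_left)
  moreover have "ga_mult G (ga_add (ga_add w e) (ga_neg (ga_mult G w e))) e
      = ga_add (ga_add (ga_mult G w e) (ga_mult G e e)) (ga_neg (ga_mult G (ga_mult G w e) e))"
    by (simp add: ga_distr_right ga_neg_right)
  moreover have "ga_mult G (ga_mult G w e) e = ga_mult G w e"
    using ga_assoc[OF w e e] ee by simp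
  ultimately have "ga_add (ga_add (ga_mult G w e) e) (ga_neg (ga_mult G w e)) = ga_zero"
    using ee by simp
  then show ?thesis
    by (simp add: ga_add_def ga_neg_def ga_zero_def fun_eq_iff)
qed

lemma pow3_FGM:
  assumes v: "v \<in> group_alg G"
  shows "v [^]\<^bsub>(FGM G :: ('a \<Rightarrow> 'f::field) monoid)\<^esub> (3::nat) = ga_mult G (ga_mult G v v) v"
proof -
  interpret M: monoid "FGM G :: ('a \<Rightarrow> 'f) monoid" by (rule monoid_FGM)
  have "v [^]\<^bsub>FGM G\<^esub> (3::nat) = ((v [^]\<^bsub>FGM G\<^esub> (0::nat)) \<otimes>\<^bsub>FGM G\<^esub> v \<otimes>\<^bsub>FGM G\<^esub> v) \<otimes>\<^bsub>FGM G\<^esub> v"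
    by (simp add: numeral_3_eq_3)
  also have "\<dots> = ga_mult G (ga_mult G v v) v"
    using v by (simp add: ga_one_left)
  finally show ?thesis .
qed

end

context frob3 begin

lemma psi_pow:
  assumes char: "CHAR('f::field) = 3" and v: "v \<in> group_alg G"
  shows "(\<Sum>k\<in>H - {\<one>}. (v [^]\<^bsub>(FGM G :: ('a \<Rightarrow> 'f) monoid)\<^esub> ((3::nat) ^ j)) k)
       = (\<Sum>k\<in>H - {\<one>}. v k) ^ (3 ^ j)"
proof (induction j)
  case 0
  interpret M: monoid "FGM G :: ('a \<Rightarrow> 'f) monoid" by (rule monoid_FGM)
  show ?case using v by (simp add: ga_one_left)
next
  case (Suc j)
  interpret M: monoid "FGM G :: ('a \<Rightarrow> 'f) monoid" by (rule monoid_FGM)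
  let ?y = "v [^]\<^bsub>(FGM G :: ('a \<Rightarrow> 'f) monoid)\<^esub> ((3::nat) ^ j)"
  have y: "?y \<in> group_alg G" using v M.nat_pow_closed[of v] by simp
  have "v [^]\<^bsub>(FGM G :: ('a \<Rightarrow> 'f) monoid)\<^esub> ((3::nat) ^ Suc j) = ?y [^]\<^bsub>(FGM G :: ('a \<Rightarrow> 'f) monoid)\<^esub> (3::nat)"
    using v M.nat_pow_pow[of v] by (simp add: mult.commute)
  also have "\<dots> = ga_mult G (ga_mult G ?y ?y) ?y" by (rule pow3_FGM[OF y])
  finally have "(\<Sum>k\<in>H - {\<one>}. (v [^]\<^bsub>(FGM G :: ('a \<Rightarrow> 'f) monoid)\<^esub> ((3::nat) ^ Suc j)) k)
      = (\<Sum>k\<in>H - {\<one>}. ?y k) ^ 3"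
    using psi_cube[OF char, of ?y] by simp
  also have "\<dots> = (\<Sum>k\<in>H - {\<one>}. v k) ^ (3 ^ Suc j)"
    using Suc by (simp add: power_mult[symmetric] mult.commute)
  finally show ?case .
qed


lemma frob_semisimple:
  assumes char: "CHAR('f::field) = 3" and finF: "finite (UNIV :: 'f set)" and cardH: "\<not> 3 dvd card H"
  shows "ga_semisimple_ring G (Delta G H :: ('a \<Rightarrow> 'f) set)"
proof -
  interpret M: monoid "FGM G :: ('a \<Rightarrow> 'f) monoid" by (rule monoid_FGM)
  define R where "R = (Delta G H :: ('a \<Rightarrow> 'f) set)"
  have Rid: "ga_ideal G R" unfolding R_def by (rule Delta_ideal)
  have RG: "R \<subseteq> group_alg G" and R0: "ga_zero \<in> R"
    and Rml: "\<And>r a. r \<in> group_alg G \<Longrightarrow> a \<in> R \<Longrightarrow> ga_mult G r a \<in> R"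
    using Rid by (auto simp: ga_ideal_def)
  have Rcs: "R \<subseteq> cs_set G H" unfolding R_def by (rule Delta_cs)
  have finM: "finite (group_alg G :: ('a \<Rightarrow> 'f) set)"
  proof -
    have "group_alg G = {f :: 'a \<Rightarrow> 'f. \<forall>x. (x \<in> carrier G \<longrightarrow> f x \<in> UNIV) \<and> (x \<notin> carrier G \<longrightarrow> f x = 0)}"
      by (auto simp: group_alg_def)
    then show ?thesis using finite_set_of_finite_funs[OF fin finF] by simp
  qed
  have claim1: "ga_mult G r a \<one> = 0" if aJ: "a \<in> ga_jacobson_rad G R" and r: "r \<in> R" for a r
  proof -
    have aR: "a \<in> R" using aJ by (simp add: ga_jacobson_rad_def)
    have rG: "r \<in> group_alg G" using r RG by auto
    have aG: "a \<in> group_alg G" using aR RG by auto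
    define z where "z = ga_mult G r a"
    have zR: "z \<in> R" unfolding z_def using Rml rG aR by simp
    have zG: "z \<in> group_alg G" using zR RG by auto
    obtain n :: nat where n1: "n \<ge> 1"
      and idem: "z [^]\<^bsub>FGM G\<^esub> n \<otimes>\<^bsub>FGM G\<^esub> z [^]\<^bsub>FGM G\<^esub> n = z [^]\<^bsub>FGM G\<^esub> n"
      using M.idem_power[of z] finM zG by auto
    define p where "p = z [^]\<^bsub>FGM G\<^esub> (n - 1)"
    have pG: "p \<in> group_alg G" unfolding p_def using M.nat_pow_closed[of z] zG by simp
    define s where "s = ga_mult G p r"
    have sR: "s \<in> R"
    proof -
      have "ga_mult G p r \<in> R" using Rml pG r by simp
      then show ?thesis by (simp add: s_def)
    qed
    have zn: "z [^]\<^bsub>FGM G\<^esub> n = ga_mult G s a"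
    proof -
      have "z [^]\<^bsub>FGM G\<^esub> n = z [^]\<^bsub>FGM G\<^esub> Suc (n - 1)" using n1 by simp
      also have "\<dots> = ga_mult G p z" by (simp add: p_def)
      also have "\<dots> = ga_mult G s a" unfolding z_def s_def by (rule ga_assoc[OF pG rG aG, symmetric])
      finally show ?thesis .
    qed
    obtain w where wR: "w \<in> R"
      and q: "ga_add (ga_add w (ga_mult G s a)) (ga_neg (ga_mult G w (ga_mult G s a))) = ga_zero"
      using aJ sR by (auto simp: ga_jacobson_rad_def)
    have znG: "z [^]\<^bsub>FGM G\<^esub> n \<in> group_alg G" using M.nat_pow_closed[of z] zG by simp
    have zn0: "z [^]\<^bsub>FGM G\<^esub> n = ga_zero"
      using quasi_idem[of w "z [^]\<^bsub>FGM G\<^esub> n"] wR RG znG idem q zn by auto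
    have "n < 2 ^ n" by (rule less_exp)
    moreover have "(2::nat) ^ n \<le> 3 ^ n" by (rule power_mono) auto
    ultimately have "n \<le> 3 ^ n" by simp
    then have "z [^]\<^bsub>FGM G\<^esub> ((3::nat) ^ n) = z [^]\<^bsub>FGM G\<^esub> n \<otimes>\<^bsub>FGM G\<^esub> z [^]\<^bsub>FGM G\<^esub> (3 ^ n - n)"
      using M.nat_pow_mult[of z n "3 ^ n - n"] zG by simp
    also have "\<dots> = ga_zero" using zn0 by (simp add: ga_zero_left)
    finally have z3: "z [^]\<^bsub>FGM G\<^esub> ((3::nat) ^ n) = ga_zero" .
    have "(\<Sum>k\<in>H - {\<one>}. z k) ^ (3 ^ n) = (\<Sum>k\<in>H - {\<one>}. (ga_zero :: 'a \<Rightarrow> 'f) k)"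
      using psi_pow[OF char zG, of n] z3 by simp
    also have "\<dots> = 0" by (simp add: ga_zero_def)
    finally have psi0: "(\<Sum>k\<in>H - {\<one>}. z k) = 0" by simp
    have "(\<Sum>h\<in>H. z (h \<otimes> \<one>)) = 0" using zR Rcs by (auto simp: cs_set_def)
    moreover have "(\<Sum>h\<in>H. z (h \<otimes> \<one>)) = (\<Sum>h\<in>H. z h)"
      by (rule sum.cong[OF refl]) (use H_carrier in auto)
    moreover have "(\<Sum>h\<in>H. z h) = z \<one> + (\<Sum>k\<in>H - {\<one>}. z k)"
      using finH Hsub by (simp add: sum.remove subgroup.one_closed)
    ultimately have "z \<one> = 0" using psi0 by simp
    then show ?thesis by (simp add: z_def)
  qed
  have claim2: "a (inv h \<otimes> g) = a g"
    if aJ: "a \<in> ga_jacobson_rad G R" and g: "g \<in> carrier G" and h: "h \<in> H" for a g h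
  proof -
    have aR: "a \<in> R" using aJ by (simp add: ga_jacobson_rad_def)
    have aG: "a \<in> group_alg G" using aR RG by auto
    have hc: "h \<in> carrier G" using h H_carrier by auto
    define e where "e = (ga_add (ga_basis G h) (ga_neg (ga_basis G \<one>)) :: 'a \<Rightarrow> 'f)"
    have eR: "e \<in> R" unfolding e_def R_def by (rule gens_Delta[OF h])
    have eG: "e \<in> group_alg G" using eR RG by auto
    have bG: "(ga_basis G (inv g) :: 'a \<Rightarrow> 'f) \<in> group_alg G" using g by (simp add: ga_basis_in)
    have rR: "ga_mult G (ga_basis G (inv g)) e \<in> R" using Rml bG eR by simp
    have "0 = ga_mult G (ga_mult G (ga_basis G (inv g)) e) a \<one>" using claim1[OF aJ rR] by simp
    also have "\<dots> = ga_mult G (ga_basis G (inv g)) (ga_mult G e a) \<one>"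
      by (simp add: ga_assoc[OF bG eG aG])
    also have "\<dots> = ga_mult G e a g" using g by (simp add: ga_basis_mult)
    also have "\<dots> = ga_mult G (ga_basis G h) a g - ga_mult G (ga_basis G \<one>) a g"
      by (simp only: e_def ga_distr_right ga_neg_right) (simp add: ga_add_def ga_neg_def)
    also have "\<dots> = a (inv h \<otimes> g) - a g" using g hc by (simp add: ga_basis_mult)
    finally show ?thesis by simp
  qed
  have claim3: "a = ga_zero" if aJ: "a \<in> ga_jacobson_rad G R" for a
  proof (rule ext)
    fix g
    have aR: "a \<in> R" using aJ by (simp add: ga_jacobson_rad_def)
    have aG: "a \<in> group_alg G" using aR RG by auto
    show "a g = ga_zero g"
    proof (cases "g \<in> carrier G")
      case False then show ?thesis using aG by (simp add: group_alg_def ga_zero_def)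
    next
      case g: True
      have "(\<Sum>h\<in>H. a (h \<otimes> g)) = 0" using aR Rcs g by (auto simp: cs_set_def)
      moreover have "(\<Sum>h\<in>H. a (h \<otimes> g)) = (\<Sum>h\<in>H. a (inv h \<otimes> g))"
      proof (rule sum.reindex_bij_witness[where i = "\<lambda>x. inv x" and j = "\<lambda>x. inv x"])
        fix h assume h: "h \<in> H"
        then have hc: "h \<in> carrier G" using H_carrier by auto
        show "inv (inv h) = h" using hc by simp
        show "inv h \<in> H" using h Hsub by (simp add: subgroup.m_inv_closed)
        show "inv (inv h) = h" using hc by simp
        show "inv h \<in> H" using h Hsub by (simp add: subgroup.m_inv_closed)
        show "a (inv (inv h) \<otimes> g) = a (h \<otimes> g)" using hc by simp
      qed
      moreover have "(\<Sum>h\<in>H. a (inv h \<otimes> g)) = (\<Sum>h\<in>H. a g)"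
        by (rule sum.cong[OF refl]) (rule claim2[OF aJ g])
      ultimately have "of_nat (card H) * a g = 0" by simp
      moreover have "(of_nat (card H) :: 'f) \<noteq> 0"
        using cardH char by (simp add: of_nat_eq_0_iff_char_dvd)
      ultimately show ?thesis by (simp add: ga_zero_def)
    qed
  qed
  have zeroJ: "ga_zero \<in> ga_jacobson_rad G R"
  proof -
    have "ga_add (ga_add ga_zero (ga_mult G r ga_zero)) (ga_neg (ga_mult G ga_zero (ga_mult G r ga_zero)))
        = (ga_zero :: 'a \<Rightarrow> 'f)" for r
      by (simp add: ga_zero_right ga_zero_left) (simp add: ga_zero_def ga_add_def ga_neg_def)
    then show ?thesis using R0 by (auto simp: ga_jacobson_rad_def)
  qed
  show ?thesis
    unfolding ga_semisimple_ring_def R_def[symmetric]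
    using claim3 zeroJ by blast
qed

end



locale tgroup = group G for G (structure) +
  fixes x y :: 'a and m :: nat and t :: int
  assumes xG: "x \<in> carrier G" and yG: "y \<in> carrier G"
    and gen: "generate G {x, y} = carrier G"
    and xm: "x [^] m = \<one>" and y3: "y [^] (3::nat) = \<one>"
    and conj: "inv y \<otimes> x \<otimes> y = x [^] t"
    and mdvd: "int m dvd t^2 + t + 1"
    and m3: "\<not> 3 dvd m"
    and finG: "finite (carrier G)"
begin

lemma yy: "w \<in> carrier G \<Longrightarrow> y \<otimes> (inv y \<otimes> w) = w"
  using yG by (simp add: m_assoc[symmetric])

lemma ypow_assoc: "w \<in> carrier G \<Longrightarrow> y [^] (a::nat) \<otimes> (y [^] (b::nat) \<otimes> w) = y [^] (a + b) \<otimes> w"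
  using yG by (simp add: m_assoc[symmetric] nat_pow_mult)

lemma conj_hom: "(\<lambda>z. inv y \<otimes> z \<otimes> y) \<in> hom G G"
  by (rule homI) (auto simp: yG m_assoc yy)

lemma conj_pow: "inv y \<otimes> x [^] (i::int) \<otimes> y = x [^] (t * i)"
proof -
  have "inv y \<otimes> x [^] i \<otimes> y = (inv y \<otimes> x \<otimes> y) [^] i"
    using hom_int_pow[OF conj_hom xG is_group is_group] by simp
  also have "\<dots> = x [^] (t * i)" using conj by (simp add: int_pow_pow xG)
  finally show ?thesis .
qed

lemma push: "x [^] (i::int) \<otimes> y = y \<otimes> x [^] (t * i)"
proof -
  have "y \<otimes> (inv y \<otimes> x [^] i \<otimes> y) = x [^] i \<otimes> y"
    using xG yG by (simp add: m_assoc flip: m_assoc[of y "inv y"])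
  then show ?thesis using conj_pow by simp
qed

lemma push_pow: "x [^] (i::int) \<otimes> y [^] (l::nat) = y [^] l \<otimes> x [^] (t ^ l * i)"
proof (induction l arbitrary: i)
  case 0 then show ?case using xG by simp
next
  case (Suc l)
  have "x [^] i \<otimes> y [^] Suc l = (x [^] i \<otimes> y [^] l) \<otimes> y"
    using xG yG by (simp add: m_assoc)
  also have "\<dots> = y [^] l \<otimes> (x [^] (t ^ l * i) \<otimes> y)"
    using Suc xG yG by (simp add: m_assoc)
  also have "\<dots> = y [^] l \<otimes> (y \<otimes> x [^] (t * (t ^ l * i)))" by (simp add: push)
  also have "\<dots> = y [^] Suc l \<otimes> x [^] (t ^ Suc l * i)"
    using xG yG by (simp add: m_assoc mult.assoc)
  finally show ?case .
qed

lemma inv_y: "inv y = y [^] (2::nat)"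
proof -
  have "y [^] (2::nat) \<otimes> y = \<one>" using y3 yG by (simp add: numeral_3_eq_3 numeral_2_eq_2 m_assoc)
  then show ?thesis using yG by (simp add: inv_equality)
qed

lemma carrier_form:
  assumes g: "g \<in> carrier G"
  shows "\<exists>(j::nat) (i::int). g = y [^] j \<otimes> x [^] i"
proof -
  have "g \<in> generate G {x, y}" using g gen by simp
  then show ?thesis
  proof (induction rule: generate.induct)
    case one
    then show ?case by (rule exI[of _ 0], rule exI[of _ 0]) simp
  next
    case (incl h)
    then show ?case
    proof
      assume "h = x" then show ?thesis using xG by (intro exI[of _ 0] exI[of _ 1]) simp
    next
      assume "h \<in> {y}" then show ?thesis using yG by (intro exI[of _ 1] exI[of _ 0]) simp
    qed
  next
    case (inv h)
    then show ?case
    proof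
      assume "h = x" then show ?thesis using xG by (intro exI[of _ 0] exI[of _ "-1"]) (simp add: int_pow_neg)
    next
      assume "h \<in> {y}" then show ?thesis using yG inv_y by (intro exI[of _ 2] exI[of _ 0]) simp
    qed
  next
    case (eng h1 h2)
    then obtain j i l k where h1: "h1 = y [^] (j::nat) \<otimes> x [^] (i::int)"
      and h2: "h2 = y [^] (l::nat) \<otimes> x [^] (k::int)" by blast
    have "h1 \<otimes> h2 = y [^] j \<otimes> (x [^] i \<otimes> y [^] l) \<otimes> x [^] k"
      using xG yG by (simp add: h1 h2 m_assoc)
    also have "\<dots> = y [^] j \<otimes> y [^] l \<otimes> (x [^] (t ^ l * i) \<otimes> x [^] k)"
      using xG yG by (simp add: push_pow m_assoc)
    also have "\<dots> = y [^] (j + l) \<otimes> x [^] (t ^ l * i + k)"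
      using xG yG by (simp add: nat_pow_mult int_pow_mult)
    finally show ?case by blast
  qed
qed

definition HH where "HH = generate G {x}"

lemma HH_form: "HH = {x [^] (i::int) | i. i \<in> UNIV}"
  unfolding HH_def by (rule generate_pow[OF xG])

lemma HH_sub: "subgroup HH G"
  unfolding HH_def using xG by (intro generate_is_subgroup) auto

lemma xpow_HH: "x [^] (i::int) \<in> HH"
  using HH_form by auto

lemma HH_norm:
  assumes g: "g \<in> carrier G" and h: "h \<in> HH"
  shows "inv g \<otimes> h \<otimes> g \<in> HH"
proof -
  obtain j k where gf: "g = y [^] (j::nat) \<otimes> x [^] (k::int)" using carrier_form[OF g] by blast
  obtain i where hf: "h = x [^] (i::int)" using h HH_form by auto
  have "inv g \<otimes> h \<otimes> g = inv (x [^] k) \<otimes> (inv (y [^] j) \<otimes> (x [^] i \<otimes> y [^] j)) \<otimes> x [^] k"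
    using xG yG by (simp add: gf hf inv_mult_group m_assoc)
  also have "\<dots> = inv (x [^] k) \<otimes> x [^] (t ^ j * i) \<otimes> x [^] k"
    using xG yG by (simp add: push_pow flip: m_assoc[of "inv (y [^] j)" "y [^] j"])
  also have "\<dots> \<in> HH"
    using HH_sub xpow_HH by (intro subgroup.m_closed subgroup.m_inv_closed) auto
  finally show ?thesis .
qed

lemma x_mult_one: "int m dvd c \<Longrightarrow> x [^] (c * i) = \<one>"
proof -
  assume "int m dvd c"
  then obtain d where "c = int m * d" by (auto simp: dvd_def)
  then have "x [^] (c * i) = (x [^] (int m)) [^] (d * i)" using xG by (simp add: int_pow_pow mult.assoc)
  also have "\<dots> = \<one>" using xm by (simp add: int_pow_int)
  finally show ?thesis .
qed

lemma cube_formula: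
  "(y [^] (r::nat) \<otimes> x [^] (i::int)) \<otimes> (y [^] r \<otimes> x [^] i) \<otimes> (y [^] r \<otimes> x [^] i)
     = y [^] (r + r + r) \<otimes> x [^] ((t ^ r * t ^ r + t ^ r + 1) * i)"
proof -
  have "(y [^] r \<otimes> x [^] i) \<otimes> (y [^] r \<otimes> x [^] i) = y [^] r \<otimes> (x [^] i \<otimes> y [^] r) \<otimes> x [^] i"
    using xG yG by (simp add: m_assoc)
  also have "\<dots> = y [^] (r + r) \<otimes> x [^] (t ^ r * i + i)"
    using xG yG by (simp only: push_pow) (simp add: m_assoc ypow_assoc int_pow_mult[symmetric])
  finally have sq: "(y [^] r \<otimes> x [^] i) \<otimes> (y [^] r \<otimes> x [^] i) = y [^] (r + r) \<otimes> x [^] (t ^ r * i + i)" .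
  have "y [^] (r + r) \<otimes> x [^] (t ^ r * i + i) \<otimes> (y [^] r \<otimes> x [^] i)
      = y [^] (r + r) \<otimes> (x [^] (t ^ r * i + i) \<otimes> y [^] r) \<otimes> x [^] i"
    using xG yG by (simp add: m_assoc)
  also have "\<dots> = y [^] (r + r + r) \<otimes> x [^] (t ^ r * (t ^ r * i + i) + i)"
    using xG yG by (simp only: push_pow) (simp add: m_assoc ypow_assoc int_pow_mult[symmetric])
  also have "t ^ r * (t ^ r * i + i) + i = (t ^ r * t ^ r + t ^ r + 1) * i"
    by (simp add: algebra_simps)
  finally show ?thesis using sq by simp
qed

lemma y_mod: "y [^] (j::nat) = y [^] (j mod 3)"
proof -
  have "y [^] j = y [^] (3 * (j div 3) + j mod 3)" by simp
  also have "\<dots> = (y [^] (3::nat)) [^] (j div 3) \<otimes> y [^] (j mod 3)"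
    using yG by (simp add: nat_pow_mult nat_pow_pow)
  also have "\<dots> = y [^] (j mod 3)" using y3 yG by simp
  finally show ?thesis .
qed

lemma HH_cube_out:
  assumes g: "g \<in> carrier G" and gH: "g \<notin> HH"
  shows "g \<otimes> g \<otimes> g = \<one>"
proof -
  obtain j i where gf: "g = y [^] (j::nat) \<otimes> x [^] (i::int)" using carrier_form[OF g] by blast
  define r where "r = j mod 3"
  have gr: "g = y [^] r \<otimes> x [^] i" using gf y_mod by (simp add: r_def)
  have r3: "r < 3" by (simp add: r_def)
  have y3r: "y [^] (r + r + r) = \<one>"
  proof -
    have e: "r + r + r = 3 * r" by simp
    have "y [^] (r + r + r) = (y [^] (3::nat)) [^] r" unfolding e using yG by (simp add: nat_pow_pow)
    then show ?thesis using y3 by simp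
  qed
  have "r \<noteq> 0"
  proof
    assume "r = 0"
    then have "g = x [^] i" using gr xG by simp
    then show False using gH xpow_HH by simp
  qed
  then have "r = 1 \<or> r = 2" using r3 by auto
  then have dv: "int m dvd (t ^ r * t ^ r + t ^ r + 1)"
  proof
    assume "r = 1" then show ?thesis using mdvd by (simp add: power2_eq_square)
  next
    assume "r = 2"
    then have "t ^ r * t ^ r + t ^ r + 1 = (t^2 + t + 1) * (t^2 - t + 1)"
      by (simp add: algebra_simps power2_eq_square)
    then show ?thesis using mdvd by simp
  qed
  show ?thesis unfolding gr cube_formula using y3r x_mult_one[OF dv] xG by simp
qed

lemma HH_cube_in:
  assumes h: "h \<in> HH" and h1: "h \<noteq> \<one>"
  shows "h \<otimes> h \<otimes> h \<noteq> \<one>"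
proof
  assume c: "h \<otimes> h \<otimes> h = \<one>"
  obtain i where hf: "h = x [^] (i::int)" using h HH_form by auto
  have hc: "h \<in> carrier G" using hf xG by simp
  have "h [^] (3::nat) = \<one>" using c hc by (simp add: numeral_3_eq_3 m_assoc)
  then have d3: "ord h dvd 3" using pow_eq_id[OF hc] by simp
  have "h [^] m = \<one>"
  proof -
    have "h [^] m = h [^] (int m)" by (simp add: int_pow_int)
    also have "\<dots> = x [^] (int m * i)" using hf xG by (simp add: int_pow_pow mult.commute)
    also have "\<dots> = \<one>" by (rule x_mult_one) simp
    finally show ?thesis .
  qed
  then have dm: "ord h dvd m" using pow_eq_id[OF hc] by simp
  have "ord h = 1"
  proof -
    have "ord h dvd gcd 3 m" using d3 dm by simp
    moreover have "coprime (3::nat) m" using m3 by (simp add: prime_imp_coprime)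
    ultimately show ?thesis by simp
  qed
  then show False using h1 ord_eq_1[OF hc] by simp
qed

lemma HH_card: "\<not> 3 dvd card HH"
proof
  assume "3 dvd card HH"
  moreover have "card HH = ord x" unfolding HH_def by (rule generate_pow_card[OF xG, symmetric])
  moreover have "ord x dvd m" using pow_eq_id[OF xG] xm by simp
  ultimately show False using m3 dvd_trans by metis
qed

lemma frob3_HH: "frob3 G HH"
proof -
  have "fgroup G" by unfold_locales (rule finG)
  then show ?thesis
    by (simp add: frob3_def frob3_axioms_def HH_sub HH_norm HH_cube_out HH_cube_in)
qed

end


theorem proposition3p10:
  fixes G :: "('g, 'b) monoid_scheme"
    and x y :: 'g
    and k :: nat and m :: nat and t :: int
  assumes F_finite: "finite (UNIV :: 'f::field set)"
    and F_char: "CHAR('f) = 3"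
    and m_def: "m = 3 * k + 1"
    and t_cube: "t ^ 3 mod int m = 1 mod int m"
    and t_gcd: "gcd (int m) (t - 1) = 1"
    and grp: "group G"
    and xG: "x \<in> carrier G" and yG: "y \<in> carrier G"
    and gen: "generate G {x, y} = carrier G"
    and x_ord: "x [^]\<^bsub>G\<^esub> m = \<one>\<^bsub>G\<^esub>"
    and y_ord: "y [^]\<^bsub>G\<^esub> (3::nat) = \<one>\<^bsub>G\<^esub>"
    and conj: "inv\<^bsub>G\<^esub> y \<otimes>\<^bsub>G\<^esub> x \<otimes>\<^bsub>G\<^esub> y = x [^]\<^bsub>G\<^esub> t"
    and G_order: "order G = 3 * m"
  shows "ga_semisimple_ring G (Delta G (generate G {x}) :: ('g \<Rightarrow> 'f) set)"
proof -
  interpret group G by (rule grp)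
  have finG: "finite (carrier G)"
    using G_order m_def unfolding order_def by (intro card_ge_0_finite) simp
  have m3: "\<not> 3 dvd m" using m_def by presburger
  have d1: "int m dvd t ^ 3 - 1" using t_cube by (simp add: mod_eq_dvd_iff)
  have e1: "t ^ 3 - 1 = (t - 1) * (t ^ 2 + t + 1)"
    by (simp add: algebra_simps power2_eq_square power3_eq_cube)
  have cop: "coprime (int m) (t - 1)" using t_gcd by (simp add: coprime_iff_gcd_eq_1)
  have mdvd: "int m dvd t ^ 2 + t + 1"
    using d1 e1 cop by (metis coprime_dvd_mult_right_iff)
  interpret T: tgroup G x y m t
    by unfold_locales (use xG yG gen x_ord y_ord conj mdvd m3 finG in auto)
  interpret F: frob3 G T.HH by (rule T.frob3_HH)
  have "ga_semisimple_ring G (Delta G T.HH :: ('g \<Rightarrow> 'f) set)"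
    by (rule F.frob_semisimple[OF F_char F_finite T.HH_card])
  then show ?thesis by (simp add: T.HH_def)
qed

end
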